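(* For every integer $\ell\ge 3$, the diameter of $CK(3,\ell)$ is at most $2\ell-1$.
   Context: Let $\Sigma=\{0,1,\dots,d\}$. The cyclic Kautz digraph $CK(d,\ell)$ has as vertices all sequences $a_1\ldots a_\ell\in\Sigma^\ell$ with $a_i\neq a_{i+1}$ for $1\le i\le \ell-1$ and $a_1\neq a_\ell$, with an arc from $a_1\ldots a_\ell$ to $b_1\ldots b_\ell$ iff both are vertices and $b_i=a_{i+1}$ for $1\le i\le\ell-1$. The diameter is the maximum over ordered pairs of vertices of the directed distance. *)

theory Defs
  imports Main "HOL-Library.Extended_Nat"
begin

definition ck_vertex :: "nat \<Rightarrow> nat \<Rightarrow> nat list \<Rightarrow> bool" where
  "ck_vertex d l a \<longleftrightarrow> length a = l \<and> set a \<subseteq> {0..d}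
     \<and> (\<forall>i. Suc i < l \<longrightarrow> a ! i \<noteq> a ! Suc i)
     \<and> a ! 0 \<noteq> a ! (l - 1)"

definition ck_arcs :: "nat \<Rightarrow> nat \<Rightarrow> (nat list \<times> nat list) set" where
  "ck_arcs d l = {(a, b). ck_vertex d l a \<and> ck_vertex d l b
     \<and> (\<forall>i. Suc i < l \<longrightarrow> b ! i = a ! Suc i)}"

definition ck_dist :: "nat \<Rightarrow> nat \<Rightarrow> nat list \<Rightarrow> nat list \<Rightarrow> enat" where
  "ck_dist d l u v = (INF k \<in> {k. (u, v) \<in> ck_arcs d l ^^ k}. enat k)"

definition ck_diameter :: "nat \<Rightarrow> nat \<Rightarrow> enat" where
  "ck_diameter d l = (SUP p \<in> {(u, v). ck_vertex d l u \<and> ck_vertex d l v}.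
      ck_dist d l (fst p) (snd p))"

end

theory Submission
  imports Defs
begin

lemma vert_win:
  assumes "l \<ge> 2" "\<forall>t<l. f (i+t) \<le> 3" "\<forall>t. Suc t < l \<longrightarrow> f (i+t) \<noteq> f (i+Suc t)"
    "f i \<noteq> f (i+l-1)"
  shows "ck_vertex 3 l (map f [i..<i+l])"
  unfolding ck_vertex_def
proof (intro conjI allI impI)
  show "length (map f [i..<i + l]) = l" by simp
  show "set (map f [i..<i + l]) \<subseteq> {0..3}"
  proof
    fix x assume "x \<in> set (map f [i..<i + l])"
    then obtain t where "t \<in> {i..<i+l}" "x = f t" by auto
    then show "x \<in> {0..3}" using assms(2)[rule_format, of "t-i"] by auto
  qed
  fix t assume "Suc t < l"
  then show "map f [i..<i + l] ! t \<noteq> map f [i..<i + l] ! Suc t" using assms(3) by simp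
next
  show "map f [i..<i + l] ! 0 \<noteq> map f [i..<i + l] ! (l - 1)" using assms
    by (simp add: add.commute)
qed

lemma walk:
  assumes "l \<ge> 2" "\<forall>i\<le>k. ck_vertex 3 l (map f [i..<i+l])"
  shows "(map f [0..<l], map f [k..<k+l]) \<in> ck_arcs 3 l ^^ k"
  using assms(2)
proof (induction k)
  case 0
  then show ?case by simp
next
  case (Suc k)
  have "(map f [0..<l], map f [k..<k+l]) \<in> ck_arcs 3 l ^^ k" using Suc by simp
  moreover have "(map f [k..<k+l], map f [Suc k..<Suc k+l]) \<in> ck_arcs 3 l"
    unfolding ck_arcs_def using Suc.prems by (auto simp del: upt_Suc)
  ultimately show ?case by auto
qed

lemma seq_dist:
  assumes "l \<ge> 2" "\<forall>t<k+l. f t \<le> 3" "\<forall>t. Suc t < k+l \<longrightarrow> f t \<noteq> f (Suc t)"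
    "\<forall>i\<le>k. f i \<noteq> f (i+l-1)"
  shows "ck_dist 3 l (map f [0..<l]) (map f [k..<k+l]) \<le> enat k"
proof -
  have "\<forall>i\<le>k. ck_vertex 3 l (map f [i..<i+l])"
  proof (intro allI impI)
    fix i assume "i \<le> k"
    show "ck_vertex 3 l (map f [i..<i+l])"
    proof (rule vert_win)
      show "\<forall>t<l. f (i+t) \<le> 3" using assms(2) \<open>i \<le> k\<close> by auto
      show "\<forall>t. Suc t < l \<longrightarrow> f (i+t) \<noteq> f (i+Suc t)" using assms(3) \<open>i \<le> k\<close> by auto
      show "f i \<noteq> f (i+l-1)" using assms(4) \<open>i \<le> k\<close> by auto
    qed (rule assms(1))
  qed
  then have "(map f [0..<l], map f [k..<k+l]) \<in> ck_arcs 3 l ^^ k" using walk assms(1) by blast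
  then show ?thesis unfolding ck_dist_def by (auto intro: INF_lower2)
qed

definition chP :: "nat \<Rightarrow> (nat \<Rightarrow> nat) \<Rightarrow> (nat \<Rightarrow> nat) \<Rightarrow> nat \<Rightarrow> nat \<Rightarrow> nat \<Rightarrow> bool" where
  "chP n a b e j p \<longleftrightarrow> (\<exists>y. y (j-1) = p \<and> (\<forall>i. j \<le> i \<longrightarrow> i \<le> n \<longrightarrow>
      y i \<le> 3 \<and> y i \<noteq> a i \<and> y i \<noteq> b i \<and> y i \<noteq> y (i-1)) \<and> y n \<noteq> e)"

definition chQ :: "nat \<Rightarrow> (nat \<Rightarrow> nat) \<Rightarrow> (nat \<Rightarrow> nat) \<Rightarrow> nat \<Rightarrow> nat \<Rightarrow> nat \<Rightarrow> bool" where
  "chQ n a b e j p \<longleftrightarrow> (\<exists>y. y (j-1) = p \<and> (\<forall>i. j \<le> i \<longrightarrow> i < n \<longrightarrow>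
      y i \<le> 3 \<and> y i \<noteq> a i \<and> y i \<noteq> b (Suc i) \<and> y i \<noteq> y (i-1)) \<and> y (n-1) \<noteq> e)"

lemma chP_base:
  assumes "1 \<le> n" "z \<le> 3" "z \<noteq> a n" "z \<noteq> b n" "z \<noteq> e" "z \<noteq> p"
  shows "chP n a b e n p"
  unfolding chP_def
  by (rule exI[of _ "(\<lambda>_. z)(n-1 := p)"]) (use assms in auto)

lemma chP_step:
  assumes "1 \<le> j" "j < n" "z \<le> 3" "z \<noteq> a j" "z \<noteq> b j" "z \<noteq> p" "chP n a b e (Suc j) z"
  shows "chP n a b e j p"
proof -
  obtain y where y: "y j = z" "\<forall>i. Suc j \<le> i \<longrightarrow> i \<le> n \<longrightarrow>
      y i \<le> 3 \<and> y i \<noteq> a i \<and> y i \<noteq> b i \<and> y i \<noteq> y (i-1)" "y n \<noteq> e"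
    using assms(7) unfolding chP_def by auto
  have A: "\<forall>i. j \<le> i \<longrightarrow> i \<le> n \<longrightarrow> (y(j - 1 := p)) i \<le> 3 \<and> (y(j - 1 := p)) i \<noteq> a i \<and> (y(j - 1 := p)) i \<noteq> b i \<and>
         (y(j - 1 := p)) i \<noteq> (y(j - 1 := p)) (i - 1)"
  proof (intro allI impI)
    fix i assume i: "j \<le> i" "i \<le> n"
    show "(y(j - 1 := p)) i \<le> 3 \<and> (y(j - 1 := p)) i \<noteq> a i \<and> (y(j - 1 := p)) i \<noteq> b i \<and>
         (y(j - 1 := p)) i \<noteq> (y(j - 1 := p)) (i - 1)"
    proof (cases "i = j")
      case True then show ?thesis using assms y by auto
    next
      case False
      then have "Suc j \<le> i" using i by simp
      then have "i \<noteq> j - 1" "i - 1 \<noteq> j - 1" using assms(1) by auto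
      then show ?thesis using y(2)[rule_format, of i] i \<open>Suc j \<le> i\<close> by simp
    qed
  qed
  have B: "(y(j - 1 := p)) (j-1) = p" by simp
  have C: "(y(j - 1 := p)) n \<noteq> e" using assms y by auto
  show ?thesis unfolding chP_def chQ_def using A B C by blast
qed

lemma chQ_base:
  assumes "p \<noteq> e"
  shows "chQ n a b e n p"
  unfolding chQ_def
  by (rule exI[of _ "\<lambda>_. p"]) (use assms in auto)

lemma chQ_step:
  assumes "1 \<le> j" "j < n" "z \<le> 3" "z \<noteq> a j" "z \<noteq> b (Suc j)" "z \<noteq> p" "chQ n a b e (Suc j) z"
  shows "chQ n a b e j p"
proof -
  obtain y where y: "y j = z" "\<forall>i. Suc j \<le> i \<longrightarrow> i < n \<longrightarrow>
      y i \<le> 3 \<and> y i \<noteq> a i \<and> y i \<noteq> b (Suc i) \<and> y i \<noteq> y (i-1)" "y (n-1) \<noteq> e"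
    using assms(7) unfolding chQ_def by auto
  have A: "\<forall>i. j \<le> i \<longrightarrow> i < n \<longrightarrow> (y(j - 1 := p)) i \<le> 3 \<and> (y(j - 1 := p)) i \<noteq> a i \<and> (y(j - 1 := p)) i \<noteq> b (Suc i) \<and>
         (y(j - 1 := p)) i \<noteq> (y(j - 1 := p)) (i - 1)"
  proof (intro allI impI)
    fix i assume i: "j \<le> i" "i < n"
    show "(y(j - 1 := p)) i \<le> 3 \<and> (y(j - 1 := p)) i \<noteq> a i \<and> (y(j - 1 := p)) i \<noteq> b (Suc i) \<and>
         (y(j - 1 := p)) i \<noteq> (y(j - 1 := p)) (i - 1)"
    proof (cases "i = j")
      case True then show ?thesis using assms y by auto
    next
      case False
      then have "Suc j \<le> i" using i by simp
      then have "i \<noteq> j - 1" "i - 1 \<noteq> j - 1" using assms(1) by auto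
      then show ?thesis using y(2)[rule_format, of i] i \<open>Suc j \<le> i\<close> by simp
    qed
  qed
  have B: "(y(j - 1 := p)) (j-1) = p" by simp
  have C: "(y(j - 1 := p)) (n-1) \<noteq> e" using assms y by auto
  show ?thesis unfolding chP_def chQ_def using A B C by blast
qed

lemma avoid4:
  fixes x y z p :: nat
  assumes "x = y \<or> x = z \<or> y = z"
  shows "\<exists>w\<le>3. w \<noteq> x \<and> w \<noteq> y \<and> w \<noteq> z \<and> w \<noteq> p"
proof -
  have "\<not> (\<forall>w\<le>3. w = x \<or> w = y \<or> w = z \<or> w = p)"
  proof
    assume h: "\<forall>w\<le>3. w = x \<or> w = y \<or> w = z \<or> w = p"
    have "{0,1,2,3::nat} \<subseteq> {x,y,z,p}" using h[rule_format, of 0] h[rule_format, of 1] h[rule_format, of 2] h[rule_format, of 3] by auto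
    moreover have "card {x,y,z,p} \<le> 3" using assms
      by (auto simp: card_insert_if) 
    ultimately show False using card_mono[of "{x,y,z,p}" "{0,1,2,3::nat}"] by simp
  qed
  then show ?thesis by auto
qed
lemma fourth:
  fixes x y z :: nat
  assumes "x \<le> 3" "y \<le> 3" "z \<le> 3" "x \<noteq> y" "x \<noteq> z" "y \<noteq> z"
  shows "\<exists>c\<le>3. c \<noteq> x \<and> c \<noteq> y \<and> c \<noteq> z"
  using avoid4[of x x y z] by auto
lemma avoid3:
  fixes x y p :: nat
  shows "\<exists>w\<le>3. w \<noteq> x \<and> w \<noteq> y \<and> w \<noteq> p"
  using avoid4[of x x y p] by auto

definition chI :: "nat \<Rightarrow> (nat \<Rightarrow> nat) \<Rightarrow> (nat \<Rightarrow> nat) \<Rightarrow> nat \<Rightarrow> nat \<Rightarrow> bool" where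
  "chI n a b e j \<longleftrightarrow> (\<forall>p. chP n a b e j p) \<or>
     (a n \<noteq> e \<and> (\<exists>c\<le>3. c \<noteq> b j \<and> (\<forall>p. p \<noteq> c \<longrightarrow> chP n a b e j p) \<and> chQ n a b e j c))"

lemma chI_base:
  assumes "1 \<le> n" "a n \<le> 3" "b n \<le> 3" "e \<le> 3"
  shows "chI n a b e n"
proof (cases "a n = b n \<or> a n = e \<or> b n = e")
  case True
  have "chP n a b e n p" for p
  proof -
    obtain w where w: "w \<le> 3" "w \<noteq> a n" "w \<noteq> b n" "w \<noteq> e" "w \<noteq> p" using avoid4[OF True, of p] by blast
    show ?thesis by (rule chP_base[where a=a and b=b and e=e and n=n, OF assms(1) w])
  qed
  then show ?thesis unfolding chI_def by blast
next
  case False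
  then obtain c where c: "c \<le> 3" "c \<noteq> a n" "c \<noteq> b n" "c \<noteq> e" using fourth[of "a n" "b n" e] assms(2-4) by auto
  have "\<forall>p. p \<noteq> c \<longrightarrow> chP n a b e n p" using chP_base[where a=a and b=b and e=e and n=n, OF assms(1) c] by auto
  moreover have "chQ n a b e n c" using chQ_base c(4) by blast
  ultimately show ?thesis unfolding chI_def using c False by blast
qed

lemma chI_step:
  assumes "1 \<le> j" "j < n" "a j \<le> 3" "b j \<le> 3" "chI n a b e (Suc j)"
  shows "chI n a b e j"
proof -
  from assms(5) consider (A) "\<forall>p. chP n a b e (Suc j) p"
    | (B) c' where "a n \<noteq> e" "c' \<le> 3" "c' \<noteq> b (Suc j)" "\<forall>p. p \<noteq> c' \<longrightarrow> chP n a b e (Suc j) p"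
        "chQ n a b e (Suc j) c'"
    unfolding chI_def by blast
  then show ?thesis
  proof cases
    case A
    have "chP n a b e j p" for p
    proof -
      obtain w where w: "w \<le> 3" "w \<noteq> a j" "w \<noteq> b j" "w \<noteq> p" using avoid3[of "a j" "b j" p] by blast
      show ?thesis by (rule chP_step[where a=a and b=b and e=e and n=n, OF assms(1,2) w]) (use A in blast)
    qed
    then show ?thesis unfolding chI_def by blast
  next
    case B
    show ?thesis
    proof (cases "a j = b j \<or> a j = c' \<or> b j = c'")
      case True
      have "chP n a b e j p" for p
      proof -
        obtain w where w: "w \<le> 3" "w \<noteq> a j" "w \<noteq> b j" "w \<noteq> c'" "w \<noteq> p" using avoid4[OF True, of p] by blast
        show ?thesis by (rule chP_step[where a=a and b=b and e=e and n=n, OF assms(1,2) w(1,2,3,5)]) (use B(4) w(4) in blast)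
      qed
      then show ?thesis unfolding chI_def by blast
    next
      case False
      then obtain c where c: "c \<le> 3" "c \<noteq> a j" "c \<noteq> b j" "c \<noteq> c'"
        using fourth[of "a j" "b j" c'] assms(3,4) B(2) by auto
      have "chP n a b e j p" if "p \<noteq> c" for p
        by (rule chP_step[where a=a and b=b and e=e and n=n, OF assms(1,2) c(1,2,3) not_sym[OF that]]) (use B(4) c(4) in blast)
      moreover have "chQ n a b e j c"
        by (rule chQ_step[where a=a and b=b and e=e and n=n, OF assms(1,2) B(2)]) (use B False c in auto)
      ultimately show ?thesis unfolding chI_def using c B by blast
    qed
  qed
qed

lemma chI_all:
  assumes "1 \<le> n" "\<forall>i. 1 \<le> i \<longrightarrow> i \<le> n \<longrightarrow> a i \<le> 3 \<and> b i \<le> 3" "e \<le> 3"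
  shows "1 \<le> j \<Longrightarrow> j \<le> n \<Longrightarrow> chI n a b e j"
proof (induction "n - j" arbitrary: j)
  case 0
  then have "j = n" by simp
  moreover have "a n \<le> 3" "b n \<le> 3" using assms(1,2) by auto
  ultimately show ?case using chI_base[of n a b e] assms(1,3) by simp
next
  case (Suc d)
  then have jn: "j < n" and d: "d = n - Suc j" by auto
  have "chI n a b e (Suc j)" using Suc.hyps(1)[OF d] jn by simp
  moreover have "a j \<le> 3" "b j \<le> 3" using assms(2) Suc.prems jn by auto
  ultimately show ?case using chI_step[of j n a b e] Suc.prems jn by simp
qed

lemma vfacts:
  assumes "ck_vertex 3 l u" "l \<ge> 1"
  shows "length u = l" "\<forall>i<l. u!i \<le> 3" "\<forall>i. Suc i < l \<longrightarrow> u!i \<noteq> u!Suc i" "u!0 \<noteq> u!(l-1)"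
proof -
  show "length u = l" using assms unfolding ck_vertex_def by simp
  show "\<forall>i<l. u!i \<le> 3"
  proof (intro allI impI)
    fix i assume "i < l"
    then have "u!i \<in> set u" using assms unfolding ck_vertex_def by auto
    then show "u!i \<le> 3" using assms unfolding ck_vertex_def by auto
  qed
  show "\<forall>i. Suc i < l \<longrightarrow> u!i \<noteq> u!Suc i" "u!0 \<noteq> u!(l-1)" using assms unfolding ck_vertex_def by auto
qed

lemma caseP:
  assumes l: "l \<ge> 3" and u: "ck_vertex 3 l u" and v: "ck_vertex 3 l v"
    and P: "chP (l-1) (\<lambda>i. u!i) (\<lambda>i. v!(i-1)) (v!0) 1 (u!(l-1))"
  shows "ck_dist 3 l u v \<le> enat (2*l-1)"
proof -
  note U = vfacts[OF u] and V = vfacts[OF v]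
  have l1: "l \<ge> 1" using l by simp
  obtain y where y0: "y 0 = u!(l-1)" and yP: "\<forall>i. 1 \<le> i \<longrightarrow> i \<le> l-1 \<longrightarrow>
      y i \<le> 3 \<and> y i \<noteq> u!i \<and> y i \<noteq> v!(i-1) \<and> y i \<noteq> y (i-1)" and yl: "y (l-1) \<noteq> v!0"
    using P unfolding chP_def by auto
  define k where "k = 2*l-1"
  define f where "f t = (if t < l then u!t else if t < k then y (t-l+1) else v!(t-k))" for t
  have fu: "map f [0..<l] = u"
    by (rule nth_equalityI) (use U(1)[OF l1] in \<open>auto simp: f_def\<close>)
  have fv: "map f [k..<k+l] = v"
    by (rule nth_equalityI) (use V(1)[OF l1] l in \<open>auto simp: f_def k_def\<close>)
  have c1: "\<forall>t<k+l. f t \<le> 3"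
  proof (intro allI impI)
    fix t assume t: "t < k+l"
    show "f t \<le> 3"
    proof (cases "t < l")
      case True then show ?thesis using U(2)[OF l1] by (simp add: f_def)
    next
      case False
      show ?thesis
      proof (cases "t < k")
        case True then show ?thesis using False yP[rule_format, of "t-l+1"] l by (simp add: f_def k_def)
      next
        case False2: False
        then show ?thesis using False V(2)[OF l1] t by (simp add: f_def k_def)
      qed
    qed
  qed
  have c2: "\<forall>t. Suc t < k+l \<longrightarrow> f t \<noteq> f (Suc t)"
  proof (intro allI impI)
    fix t assume t: "Suc t < k+l"
    consider "Suc t < l" | "t = l-1" | "l \<le> t \<and> Suc t < k" | "t = k-1" | "k \<le> t"
      using l unfolding k_def by linarith
    then show "f t \<noteq> f (Suc t)"
    proof cases
      case 1 then show ?thesis using U(3)[OF l1] by (simp add: f_def)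
    next
      case 2
      then have "f t = u!(l-1)" "f (Suc t) = y 1" using l by (auto simp: f_def k_def)
      moreover have "1 \<le> l - 1" using l by simp
      ultimately show ?thesis using yP[rule_format, of 1] y0 by auto
    next
      case 3
      then have "f t = y (t-l+1)" "f (Suc t) = y (Suc t - l + 1)" by (auto simp: f_def)
      moreover have "Suc t - l + 1 - 1 = t - l + 1" "Suc t - l + 1 \<le> l - 1" "1 \<le> Suc t - l + 1" using 3 unfolding k_def by linarith+
      ultimately show ?thesis using yP[rule_format, of "Suc t - l + 1"] 3 unfolding k_def by auto
    next
      case 4
      then have e: "t - l + 1 = l - 1" "\<not> t < l" "t < k" "\<not> Suc t < l" "\<not> Suc t < k" "Suc t - k = 0"
        using l unfolding k_def by linarith+
      then have "f t = y (l-1)" "f (Suc t) = v!0" by (simp_all only: f_def e if_False if_True)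
      then show ?thesis using yl by auto
    next
      case 5
      then have e: "\<not> t < l" "\<not> t < k" "\<not> Suc t < l" "\<not> Suc t < k" "Suc t - k = Suc (t-k)"
        using l unfolding k_def by linarith+
      then have "f t = v!(t-k)" "f (Suc t) = v!(Suc (t-k))" by (simp_all only: f_def e if_False if_True)
      moreover have "Suc (t-k) < l" using 5 t by simp
      ultimately show ?thesis using V(3)[OF l1] by auto
    qed
  qed
  have c3: "\<forall>i\<le>k. f i \<noteq> f (i+l-1)"
  proof (intro allI impI)
    fix i assume i: "i \<le> k"
    consider "i = 0" | "1 \<le> i \<and> i \<le> l-1" | "l \<le> i \<and> i < k" | "i = k"
      using i l unfolding k_def by linarith
    then show "f i \<noteq> f (i+l-1)"
    proof cases
      case 1 then show ?thesis using U(4)[OF l1] l by (simp add: f_def)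
    next
      case 2
      then have "f i = u!i" "f (i+l-1) = y i" using l by (auto simp: f_def k_def)
      then show ?thesis using yP[rule_format, of i] 2 by auto
    next
      case 3
      then have "f i = y (i-l+1)" "f (i+l-1) = v!(i-l)" using l by (auto simp: f_def k_def)
      moreover have "i - l + 1 - 1 = i - l" "i - l + 1 \<le> l - 1" "1 \<le> i - l + 1" using 3 unfolding k_def by linarith+
      ultimately show ?thesis using yP[rule_format, of "i-l+1"] 3 unfolding k_def by auto
    next
      case 4
      then have "f i = v!0" "f (i+l-1) = v!(l-1)" using l by (auto simp: f_def k_def)
      then show ?thesis using V(4)[OF l1] by auto
    qed
  qed
  have "ck_dist 3 l (map f [0..<l]) (map f [k..<k+l]) \<le> enat k"
    by (rule seq_dist) (use l c1 c2 c3 in auto)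
  then show ?thesis using fu fv k_def by simp
qed

lemma caseQ:
  assumes l: "l \<ge> 3" and u: "ck_vertex 3 l u" and v: "ck_vertex 3 l v"
    and ne: "u!(l-1) \<noteq> v!0"
    and Q: "chQ (l-1) (\<lambda>i. u!i) (\<lambda>i. v!(i-1)) (v!0) 1 (u!(l-1))"
  shows "ck_dist 3 l u v \<le> enat (2*l-1)"
proof -
  note U = vfacts[OF u] and V = vfacts[OF v]
  have l1: "l \<ge> 1" using l by simp
  obtain y where y0: "y 0 = u!(l-1)" and yP: "\<forall>i. 1 \<le> i \<longrightarrow> i < l-1 \<longrightarrow>
      y i \<le> 3 \<and> y i \<noteq> u!i \<and> y i \<noteq> v!i \<and> y i \<noteq> y (i-1)" and yl: "y (l-1-1) \<noteq> v!0"
    using Q unfolding chQ_def by auto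
  define k where "k = 2*l-2"
  define f where "f t = (if t < l then u!t else if t < k then y (t-l+1) else v!(t-k))" for t
  have fu: "map f [0..<l] = u"
    by (rule nth_equalityI) (use U(1)[OF l1] in \<open>auto simp: f_def\<close>)
  have kl: "l \<le> k" using l unfolding k_def by simp
  have fv: "map f [k..<k+l] = v"
    by (rule nth_equalityI) (use V(1)[OF l1] kl in \<open>auto simp: f_def\<close>)
  have c1: "\<forall>t<k+l. f t \<le> 3"
  proof (intro allI impI)
    fix t assume t: "t < k+l"
    show "f t \<le> 3"
    proof (cases "t < l")
      case True then show ?thesis using U(2)[OF l1] by (simp add: f_def)
    next
      case False
      show ?thesis
      proof (cases "t < k")
        case True
        then have "1 \<le> t-l+1" "t-l+1 < l-1" using False unfolding k_def by linarith+
        then show ?thesis using True False yP[rule_format, of "t-l+1"] by (simp add: f_def)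
      next
        case False2: False
        then show ?thesis using False V(2)[OF l1] t by (simp add: f_def k_def)
      qed
    qed
  qed
  have c2: "\<forall>t. Suc t < k+l \<longrightarrow> f t \<noteq> f (Suc t)"
  proof (intro allI impI)
    fix t assume t: "Suc t < k+l"
    consider "Suc t < l" | "t = l-1" | "l \<le> t \<and> Suc t < k" | "t = k-1" | "k \<le> t"
      using l unfolding k_def by linarith
    then show "f t \<noteq> f (Suc t)"
    proof cases
      case 1 then show ?thesis using U(3)[OF l1] by (simp add: f_def)
    next
      case 2
      then have e: "t < l" "\<not> Suc t < l" "Suc t < k" "Suc t - l + 1 = 1" using l unfolding k_def by linarith+
      then have "f t = u!(l-1)" "f (Suc t) = y 1" using 2 by (simp_all only: f_def e if_False if_True)
      moreover have "1 < l - 1" using l by simp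
      ultimately show ?thesis using yP[rule_format, of 1] y0 by auto
    next
      case 3
      then have "f t = y (t-l+1)" "f (Suc t) = y (Suc t - l + 1)" by (auto simp: f_def)
      moreover have "Suc t - l + 1 - 1 = t - l + 1" "Suc t - l + 1 < l - 1" "1 \<le> Suc t - l + 1" using 3 unfolding k_def by linarith+
      ultimately show ?thesis using yP[rule_format, of "Suc t - l + 1"] 3 by auto
    next
      case 4
      then have e: "t - l + 1 = l - 1 - 1" "\<not> t < l" "t < k" "\<not> Suc t < l" "\<not> Suc t < k" "Suc t - k = 0"
        using l unfolding k_def by linarith+
      then have "f t = y (l-1-1)" "f (Suc t) = v!0" by (simp_all only: f_def e if_False if_True)
      then show ?thesis using yl by auto
    next
      case 5
      then have e: "\<not> t < l" "\<not> t < k" "\<not> Suc t < l" "\<not> Suc t < k" "Suc t - k = Suc (t-k)"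
        using l unfolding k_def by linarith+
      then have "f t = v!(t-k)" "f (Suc t) = v!(Suc (t-k))" by (simp_all only: f_def e if_False if_True)
      moreover have "Suc (t-k) < l" using 5 t by simp
      ultimately show ?thesis using V(3)[OF l1] by auto
    qed
  qed
  have c3: "\<forall>i\<le>k. f i \<noteq> f (i+l-1)"
  proof (intro allI impI)
    fix i assume i: "i \<le> k"
    consider "i = 0" | "1 \<le> i \<and> i < l-1" | "i = l - 1" | "l \<le> i \<and> i < k" | "i = k"
      using i l unfolding k_def by linarith
    then show "f i \<noteq> f (i+l-1)"
    proof cases
      case 1 then show ?thesis using U(4)[OF l1] l by (simp add: f_def)
    next
      case 2
      then have e: "i < l" "\<not> i+l-1 < l" "i+l-1 < k" "i + l - 1 - l + 1 = i" using l unfolding k_def by linarith+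
      then have "f i = u!i" "f (i+l-1) = y i" by (simp_all only: f_def e if_False if_True)
      then show ?thesis using yP[rule_format, of i] 2 by auto
    next
      case 3
      then have e: "i < l" "\<not> i+l-1 < l" "\<not> i+l-1 < k" "i + l - 1 - k = 0" using l unfolding k_def by linarith+
      then have "f i = u!(l-1)" "f (i+l-1) = v!0" using 3 by (simp_all only: f_def e if_False if_True)
      then show ?thesis using ne by auto
    next
      case 4
      then have e: "\<not> i < l" "i < k" "\<not> i+l-1 < l" "\<not> i+l-1 < k" "i + l - 1 - k = i - l + 1"
        using l unfolding k_def by linarith+
      then have "f i = y (i-l+1)" "f (i+l-1) = v!(i-l+1)" by (simp_all only: f_def e if_False if_True)
      moreover have "i - l + 1 < l - 1" "1 \<le> i - l + 1" using 4 unfolding k_def by linarith+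
      ultimately show ?thesis using yP[rule_format, of "i-l+1"] by auto
    next
      case 5
      then have "f i = v!0" "f (i+l-1) = v!(l-1)" using l by (auto simp: f_def k_def)
      then show ?thesis using V(4)[OF l1] by auto
    qed
  qed
  have "ck_dist 3 l (map f [0..<l]) (map f [k..<k+l]) \<le> enat k"
    by (rule seq_dist) (use l c1 c2 c3 in auto)
  then have "ck_dist 3 l u v \<le> enat k" using fu fv by simp
  also have "enat k \<le> enat (2*l-1)" unfolding k_def by simp
  finally show ?thesis .
qed

lemma dist_bound:
  assumes l: "l \<ge> 3" and u: "ck_vertex 3 l u" and v: "ck_vertex 3 l v"
  shows "ck_dist 3 l u v \<le> enat (2*l-1)"
proof -
  note U = vfacts[OF u] and V = vfacts[OF v]
  have l1: "l \<ge> 1" using l by simp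
  have "chI (l-1) (\<lambda>i. u!i) (\<lambda>i. v!(i-1)) (v!0) 1"
  proof (rule chI_all)
    show "\<forall>i. 1 \<le> i \<longrightarrow> i \<le> l - 1 \<longrightarrow> u ! i \<le> 3 \<and> v ! (i - 1) \<le> 3"
      using U(2)[OF l1] V(2)[OF l1] l by auto
    show "v ! 0 \<le> 3" using V(2)[OF l1] l by auto
  qed (use l in auto)
  then consider "chP (l-1) (\<lambda>i. u!i) (\<lambda>i. v!(i-1)) (v!0) 1 (u!(l-1))"
    | "u!(l-1) \<noteq> v!0" "chQ (l-1) (\<lambda>i. u!i) (\<lambda>i. v!(i-1)) (v!0) 1 (u!(l-1))"
    unfolding chI_def by (metis One_nat_def)
  then show ?thesis
  proof cases
    case 1 then show ?thesis using caseP[OF l u v] by blast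
  next
    case 2 then show ?thesis using caseQ[OF l u v] by blast
  qed
qed

theorem lemma7:
  fixes l :: nat
  assumes "l \<ge> 3"
  shows "ck_diameter 3 l \<le> enat (2 * l - 1)"
  unfolding ck_diameter_def
  by (rule SUP_least) (use dist_bound[OF assms] in auto)

end
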